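(* Let $n\ge2$, $A\in\mathbb{R}^{n\times d}$ with every row satisfying $\|A_{(i,:)}\|_2\le1$, $\mathcal{B}_d=\{\mathbf{w}\in\mathbb{R}^d:\|\mathbf{w}\|_2\le1\}$, $\alpha_t=1$, $g(\mathbf{w},\mathbf{p})=\mathbf{p}^{\top}A\mathbf{w}$, $h_t(\mathbf{w})=-g(\mathbf{w},\mathbf{p}_t)$, $\ell_t(\mathbf{p})=g(\mathbf{w}_t,\mathbf{p})$. Let $\widehat{\mathbf{w}}_0=\mathbf{0}$, $\widehat{\mathbf{p}}_0=\tfrac{\mathbf{1}}{n}$ and for $t=1,\dots,T$: $\mathbf{w}_t=\arg\min_{\mathbf{w}\in\mathcal{B}_d}\frac{1}{\sqrt{\log n}}\langle-A^{\top}\widehat{\mathbf{p}}_{t-1},\mathbf{w}\rangle+\frac12\|\mathbf{w}-\widehat{\mathbf{w}}_{t-1}\|_2^2$, $\mathbf{p}_t=\arg\min_{\mathbf{p}\in\Delta^n}\sqrt{\log n}\langle A\widehat{\mathbf{w}}_{t-1},\mathbf{p}\rangle+D_E(\mathbf{p},\widehat{\mathbf{p}}_{t-1})$, $\widehat{\mathbf{w}}_t=\arg\min_{\mathbf{w}\in\mathcal{B}_d}\frac{1}{\sqrt{\log n}}\langle-A^{\top}\mathbf{p}_t,\mathbf{w}\rangle+\frac12\|\mathbf{w}-\widehat{\mathbf{w}}_{t-1}\|_2^2$, $\widehat{\mathbf{p}}_t=\arg\min_{\mathbf{p}\in\Delta^n}\sqrt{\log n}\langle A\mathbf{w}_t,\mathbf{p}\rangle+D_E(\mathbf{p},\widehat{\mathbf{p}}_{t-1})$.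 Define $R^{\mathbf{w}}=\sum_{t=1}^Th_t(\mathbf{w}_t)-\min_{\mathbf{w}\in\mathcal{B}_d}\sum_{t=1}^Th_t(\mathbf{w})$ and $R^{\mathbf{p}}=\sum_{t=1}^T\ell_t(\mathbf{p}_t)-\min_{\mathbf{p}\in\Delta^n}\sum_{t=1}^T\ell_t(\mathbf{p})$. Then $R^{\mathbf{p}}+R^{\mathbf{w}}=O(\sqrt{\log n})$, i.e. there is a universal constant $C$ such that $R^{\mathbf{p}}+R^{\mathbf{w}}\le C\sqrt{\log n}$ for all $T$.
   Context: $\Delta^n$ is the probability simplex; $\mathbf{1}$ the all-ones vector; $D_E(\mathbf{p},\mathbf{q})=\sum_ip_i\log(p_i/q_i)$ (KL divergence). *)

theory Defs
  imports Complex_Main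
begin

text \<open>Vectors in R^k are represented as functions nat => real that vanish
  outside the index set {..<k}; an n x d matrix is nat => nat => real, only
  the entries with i < n, j < d being relevant.\<close>

definition dotv :: "nat \<Rightarrow> (nat \<Rightarrow> real) \<Rightarrow> (nat \<Rightarrow> real) \<Rightarrow> real" where
  "dotv k x y = (\<Sum>i<k. x i * y i)"

definition normv :: "nat \<Rightarrow> (nat \<Rightarrow> real) \<Rightarrow> real" where
  "normv k x = sqrt (\<Sum>i<k. (x i)\<^sup>2)"

definition matvec :: "nat \<Rightarrow> nat \<Rightarrow> (nat \<Rightarrow> nat \<Rightarrow> real) \<Rightarrow> (nat \<Rightarrow> real) \<Rightarrow> (nat \<Rightarrow> real)" where
  "matvec n d A w = (\<lambda>i. if i < n then (\<Sum>j<d. A i j * w j) else 0)"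

definition matTvec :: "nat \<Rightarrow> nat \<Rightarrow> (nat \<Rightarrow> nat \<Rightarrow> real) \<Rightarrow> (nat \<Rightarrow> real) \<Rightarrow> (nat \<Rightarrow> real)" where
  "matTvec n d A p = (\<lambda>j. if j < d then (\<Sum>i<n. A i j * p i) else 0)"

definition unit_ball :: "nat \<Rightarrow> (nat \<Rightarrow> real) set" where
  "unit_ball d = {w. (\<forall>j\<ge>d. w j = 0) \<and> normv d w \<le> 1}"

definition simplex :: "nat \<Rightarrow> (nat \<Rightarrow> real) set" where
  "simplex n = {p. (\<forall>i\<ge>n. p i = 0) \<and> (\<forall>i<n. 0 \<le> p i) \<and> (\<Sum>i<n. p i) = 1}"

definition KL :: "nat \<Rightarrow> (nat \<Rightarrow> real) \<Rightarrow> (nat \<Rightarrow> real) \<Rightarrow> real" where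
  "KL n p q = (\<Sum>i<n. p i * ln (p i / q i))"

definition game :: "nat \<Rightarrow> nat \<Rightarrow> (nat \<Rightarrow> nat \<Rightarrow> real) \<Rightarrow> (nat \<Rightarrow> real) \<Rightarrow> (nat \<Rightarrow> real) \<Rightarrow> real" where
  "game n d A w p = dotv n p (matvec n d A w)"

end

theory Submission
  imports Defs "HOL-Analysis.Convex"
begin


lemma ln_lower_aux:
  fixes x :: real assumes "x > 0"
  shows "ln x \<ge> (5*x^2 - 4*x - 1) / (2*x^2 + 4*x)"
proof -
  define g where "g = (\<lambda>x::real. ln x - (5*x^2 - 4*x - 1) / (2*x^2 + 4*x))"
  have D: "DERIV g x :> (x - 1)^3 / (x^2 * (x+2)^2)" if "x > 0" for x :: real
  proof -
    have nz: "2*x^2 + 4*x \<noteq> 0" using that by (smt (verit) zero_less_power)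
    have "DERIV g x :> 1/x - ((10*x - 4) * (2*x^2 + 4*x) - (5*x^2 - 4*x - 1) * (4*x + 4)) / (2*x^2 + 4*x)^2"
      unfolding g_def using that nz
      by (auto intro!: derivative_eq_intros simp: power2_eq_square field_simps)
    moreover have "1/x - ((10*x - 4) * (2*x^2 + 4*x) - (5*x^2 - 4*x - 1) * (4*x + 4)) / (2*x^2 + 4*x)^2
        = (x - 1)^3 / (x^2 * (x+2)^2)"
      using that nz
      by (simp add: divide_simps) (simp add: algebra_simps power2_eq_square power3_eq_cube)
    ultimately show ?thesis by simp
  qed
  have g1: "g 1 = 0" by (simp add: g_def)
  show ?thesis
  proof (cases "x \<ge> 1")
    case True
    have "g 1 \<le> g x"
      apply (rule DERIV_nonneg_imp_nondecreasing[OF True])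
      subgoal for y using D[of y] by (intro exI[of _ "(y - 1)^3 / (y^2 * (y+2)^2)"]) auto
      done
    then show ?thesis using g1 by (simp add: g_def)
  next
    case False
    have "g x \<ge> g 1"
      apply (rule DERIV_nonpos_imp_nonincreasing[of x 1])
      using False apply simp
      subgoal for y
      proof -
        assume y: "x \<le> y" "y \<le> 1"
        have "(y-1)^3 = (y-1)*(y-1)^2" by (simp add: power3_eq_cube power2_eq_square)
        also have "\<dots> \<le> 0" using y by (simp add: mult_nonpos_nonneg)
        finally have "(y - 1)^3 / (y^2 * (y+2)^2) \<le> 0" by (simp add: divide_nonpos_nonneg)
        then show ?thesis using D[of y] y assms by auto
      qed
      done
    then show ?thesis using g1 by (simp add: g_def)
  qed
qed

lemma pw_ineq:
  fixes a b :: real assumes a: "a \<ge> 0" and b: "b > 0"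
  shows "a * ln (a/b) - a + b \<ge> 3*(a-b)^2/(2*(a+2*b))"
proof (cases "a = 0")
  case True
  then show ?thesis using b by (simp add: power2_eq_square field_simps)
next
  case False
  then have a': "a > 0" using a by simp
  let ?x = "a/b"
  have x: "?x > 0" using a' b by simp
  have H1: "a * ln ?x \<ge> a * ((5*?x^2 - 4*?x - 1) / (2*?x^2 + 4*?x))"
    using ln_lower_aux[OF x] a' by (intro mult_left_mono) auto
  have E2: "(5*?x^2 - 4*?x - 1) / (2*?x^2 + 4*?x) = (5*a^2 - 4*a*b - b^2) / (2*a^2 + 4*a*b)"
  proof -
    have "(5*?x^2 - 4*?x - 1) = (5*a^2 - 4*a*b - b^2) / b^2" using b
      by (simp add: power2_eq_square field_simps)
    moreover have "(2*?x^2 + 4*?x) = (2*a^2 + 4*a*b) / b^2" using b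
      by (simp add: power2_eq_square field_simps)
    ultimately show ?thesis using b by simp
  qed
  have E3: "a * ((5*a^2 - 4*a*b - b^2) / (2*a^2 + 4*a*b)) = (a-b)*(5*a+b)/(2*(a+2*b))"
  proof -
    have "2*a^2 + 4*a*b = a * (2*(a+2*b))" by (simp add: power2_eq_square algebra_simps)
    moreover have "5*a^2 - 4*a*b - b^2 = (a-b)*(5*a+b)" by (simp add: power2_eq_square algebra_simps)
    moreover have "a+2*b > 0" using a' b by simp
    ultimately show ?thesis using a' by simp
  qed
  have E4: "(a-b)*(5*a+b)/(2*(a+2*b)) - a + b = 3*(a-b)^2/(2*(a+2*b))"
    using a' b by (simp add: divide_simps power2_eq_square) (simp add: algebra_simps)
  have "a * ln ?x \<ge> (a-b)*(5*a+b)/(2*(a+2*b))" using H1[unfolded E2 E3] .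
  then have "a * ln ?x - a + b \<ge> (a-b)*(5*a+b)/(2*(a+2*b)) - a + b" by linarith
  also note \<open>(a-b)*(5*a+b)/(2*(a+2*b)) - a + b = 3*(a-b)^2/(2*(a+2*b))\<close>
  finally show ?thesis .
qed

lemma pinsker:
  assumes a: "\<forall>i<n. a i \<ge> 0" and b: "\<forall>i<n. b i > 0"
    and sa: "(\<Sum>i<n. a i) = 1" and sb: "(\<Sum>i<n. b i) = 1"
  shows "(\<Sum>i<n. \<bar>a i - b i\<bar>)^2 \<le> 2 * KL n a b"
proof -
  define w where "w i = a i + 2 * b i" for i
  have wp: "w i > 0" if "i < n" for i using a b that by (auto simp: w_def intro: add_nonneg_pos)
  have sw: "(\<Sum>i<n. w i) = 3" using sa sb by (simp add: w_def sum.distrib sum_distrib_left[symmetric])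
  have "KL n a b = (\<Sum>i<n. a i * ln (a i / b i) - a i + b i)"
    using sa sb by (simp add: KL_def sum.distrib sum_subtractf)
  also have "\<dots> \<ge> (\<Sum>i<n. 3*(a i - b i)^2/(2*w i))"
    using pw_ineq a b by (auto intro!: sum_mono simp: w_def)
  finally have K: "(\<Sum>i<n. 3*(a i - b i)^2/(2*w i)) \<le> KL n a b" .
  have "(\<Sum>i<n. \<bar>a i - b i\<bar>) = (\<Sum>i<n. (\<bar>a i - b i\<bar> / sqrt (w i)) * sqrt (w i))"
    using wp by (intro sum.cong) (auto simp: less_imp_neq[symmetric])
  then have "(\<Sum>i<n. \<bar>a i - b i\<bar>)^2 \<le> (\<Sum>i<n. (\<bar>a i - b i\<bar> / sqrt (w i))^2) * (\<Sum>i<n. (sqrt (w i))^2)"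
    using Cauchy_Schwarz_ineq_sum by metis
  also have "\<dots> = (\<Sum>i<n. (a i - b i)^2 / w i) * 3"
  proof -
    have "(\<Sum>i<n. (sqrt (w i))^2) = 3" using wp sw by (simp add: less_imp_le)
    moreover have "(\<Sum>i<n. (\<bar>a i - b i\<bar> / sqrt (w i))^2) = (\<Sum>i<n. (a i - b i)^2 / w i)"
      using wp by (intro sum.cong) (auto simp: power_divide less_imp_le)
    ultimately show ?thesis by simp
  qed
  also have "\<dots> = 2 * (\<Sum>i<n. 3*(a i - b i)^2/(2*w i))"
    by (simp add: sum_distrib_left sum_distrib_right) (intro sum.cong, auto)
  finally show ?thesis using K by linarith
qed

lemma KL_nonneg:
  assumes "\<forall>i<n. a i \<ge> 0" "\<forall>i<n. b i > 0" "(\<Sum>i<n. a i) = 1" "(\<Sum>i<n. b i) = 1"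
  shows "KL n a b \<ge> 0"
  using pinsker[OF assms] by (smt (verit) zero_le_power2)

lemma KL_term:
  fixes q y e Z :: real assumes "q \<ge> 0" "y > 0" "Z > 0"
  shows "q * ln (q / (y * exp e / Z)) = q * ln (q / y) - e * q + q * ln Z"
proof (cases "q = 0")
  case False
  then have q: "q > 0" using assms by simp
  have "ln (q / (y * exp e / Z)) = ln q - ln y - e + ln Z"
    using q assms by (simp add: ln_div ln_mult)
  moreover have "ln (q / y) = ln q - ln y" using q assms by (simp add: ln_div)
  ultimately have L: "ln (q / (y * exp e / Z)) = ln (q / y) - e + ln Z" by simp
  show ?thesis by (simp only: L) (simp add: algebra_simps)
qed simp

lemma KL_self: "KL n x x = 0"
  unfolding KL_def by (intro sum.neutral) auto

lemma KL_argmin: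
  assumes ys: "y \<in> simplex n" and yp: "\<forall>i<n. y i > 0"
    and am: "is_arg_min (\<lambda>q. \<eta> * dotv n c q + KL n q y) (\<lambda>q. q \<in> simplex n) x"
  shows "x \<in> simplex n \<and> (\<forall>i<n. x i > 0) \<and>
    (\<forall>z\<in>simplex n. \<eta> * dotv n c x + KL n x y + KL n z x = \<eta> * dotv n c z + KL n z y)"
proof -
  define F where "F = (\<lambda>q. \<eta> * dotv n c q + KL n q y)"
  define Z where "Z = (\<Sum>i<n. y i * exp (- \<eta> * c i))"
  have ysum: "(\<Sum>i<n. y i) = 1" using ys by (simp add: simplex_def)
  then have n0: "n > 0" by (cases n) auto
  have Zp: "Z > 0" unfolding Z_def using n0 yp
    by (intro sum_pos) auto
  define xs where "xs i = (if i < n then y i * exp (- \<eta> * c i) / Z else 0)" for i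
  have xsp: "\<forall>i<n. xs i > 0" using yp Zp by (simp add: xs_def)
  have xssum: "(\<Sum>i<n. xs i) = 1"
    using Zp by (simp add: xs_def Z_def sum_divide_distrib[symmetric])
  have xss: "xs \<in> simplex n" using xsp xssum by (auto simp: simplex_def xs_def less_imp_le)
  have ident: "F q = KL n q xs - ln Z" if q: "q \<in> simplex n" for q
  proof -
    have "KL n q xs = (\<Sum>i<n. q i * ln (q i / y i) - (- \<eta> * c i) * q i + q i * ln Z)"
      unfolding KL_def
    proof (rule sum.cong)
      fix i assume "i \<in> {..<n}"
      then show "q i * ln (q i / xs i) = q i * ln (q i / y i) - (- \<eta> * c i) * q i + q i * ln Z"
        using KL_term[of "q i" "y i" Z "- \<eta> * c i"] q yp Zp by (auto simp: simplex_def xs_def)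
    qed simp
    also have "\<dots> = KL n q y + \<eta> * dotv n c q + ln Z"
    proof -
      have "(\<Sum>i<n. q i * ln (q i / y i) - (- \<eta> * c i) * q i + q i * ln Z)
          = (\<Sum>i<n. q i * ln (q i / y i)) + \<eta> * (\<Sum>i<n. c i * q i) + (\<Sum>i<n. q i) * ln Z"
        by (simp add: sum.distrib sum_subtractf sum_distrib_left sum_distrib_right mult.assoc)
      then show ?thesis using q by (simp add: KL_def dotv_def simplex_def)
    qed
    finally show ?thesis by (simp add: F_def)
  qed
  have xsim: "x \<in> simplex n" using am by (simp add: is_arg_min_def)
  have "\<not> F xs < F x" using am xss by (simp add: is_arg_min_def F_def)
  then have "KL n x xs \<le> 0" using ident[OF xsim] ident[OF xss] by (simp add: KL_self)
  moreover have "(\<Sum>i<n. \<bar>x i - xs i\<bar>)^2 \<le> 2 * KL n x xs"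
    using xsim xsp xssum by (intro pinsker) (auto simp: simplex_def)
  ultimately have "(\<Sum>i<n. \<bar>x i - xs i\<bar>) = 0" by (smt (verit) zero_le_power2 power_eq_0_iff)
  then have "\<forall>i<n. x i = xs i" by (simp add: sum_nonneg_eq_0_iff)
  then have xeq: "x = xs" using xsim by (auto simp: simplex_def xs_def fun_eq_iff)
  show ?thesis
  proof (intro conjI ballI)
    show "x \<in> simplex n" by fact
    show "\<forall>i<n. x i > 0" using xeq xsp by simp
    fix z assume z: "z \<in> simplex n"
    show "\<eta> * dotv n c x + KL n x y + KL n z x = \<eta> * dotv n c z + KL n z y"
      using ident[OF z] ident[OF xsim] xeq by (simp add: F_def KL_self)
  qed
qed

lemma normv_sq: "(normv d f)^2 = (\<Sum>j<d. (f j)^2)"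
  unfolding normv_def by (simp add: sum_nonneg)

lemma unit_ball_iff: "v \<in> unit_ball d \<longleftrightarrow> (\<forall>j\<ge>d. v j = 0) \<and> (\<Sum>j<d. (v j)^2) \<le> 1"
  unfolding unit_ball_def normv_def by simp

lemma lin_quad_nonneg:
  fixes a b :: real
  assumes b: "b \<ge> 0" and h: "\<And>s. 0 < s \<Longrightarrow> s \<le> 1 \<Longrightarrow> a + s * b \<ge> 0"
  shows "a \<ge> 0"
proof (rule ccontr)
  assume "\<not> a \<ge> 0" then have a: "a < 0" by simp
  define s where "s = min 1 (-a/(2*(b+1)))"
  have "-a/(2*(b+1)) > 0" using a b by (intro divide_pos_pos) auto
  then have s0: "s > 0" by (simp add: s_def)
  have s1: "s \<le> 1" by (simp add: s_def)
  have "s * b \<le> (-a/(2*(b+1))) * b" using b by (intro mult_right_mono) (auto simp: s_def)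
  also have "\<dots> = -a * (b / (2*(b+1)))" by simp
  also have "\<dots> \<le> -a * (1/2)"
  proof -
    have "b / (2*(b+1)) \<le> 1/2" using b by (simp add: divide_le_eq)
    then show ?thesis using a by (intro mult_left_mono) auto
  qed
  finally have "a + s * b < 0" using a by linarith
  with h[OF s0 s1] show False by linarith
qed

lemma ball_argmin:
  assumes am: "is_arg_min (\<lambda>v. \<eta> * dotv d g v + 1/2 * (normv d (\<lambda>j. v j - y j))^2) (\<lambda>v. v \<in> unit_ball d) x"
    and z: "z \<in> unit_ball d"
  shows "\<eta> * dotv d g x + 1/2 * (\<Sum>j<d. (x j - y j)^2) + 1/2 * (\<Sum>j<d. (z j - x j)^2)
         \<le> \<eta> * dotv d g z + 1/2 * (\<Sum>j<d. (z j - y j)^2)"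
proof -
  define F where "F = (\<lambda>v. \<eta> * dotv d g v + 1/2 * (\<Sum>j<d. (v j - y j)^2))"
  have xb: "x \<in> unit_ball d" using am by (simp add: is_arg_min_def)
  have min: "F x \<le> F v" if "v \<in> unit_ball d" for v
  proof -
    have "\<not> (v \<in> unit_ball d \<and> \<eta> * dotv d g v + 1/2 * (normv d (\<lambda>j. v j - y j))^2
              < \<eta> * dotv d g x + 1/2 * (normv d (\<lambda>j. x j - y j))^2)"
      using am unfolding is_arg_min_def by blast
    then show ?thesis using that unfolding F_def normv_sq by simp
  qed
  define a where "a = \<eta> * (\<Sum>j<d. g j * (z j - x j)) + (\<Sum>j<d. (x j - y j) * (z j - x j))"
  define b where "b = 1/2 * (\<Sum>j<d. (z j - x j)^2)"
  have "a + s * b \<ge> 0" if s: "0 < s" "s \<le> 1" for s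
  proof -
    define v where "v j = x j + s * (z j - x j)" for j
    have pt: "(v j)^2 \<le> (1-s) * (x j)^2 + s * (z j)^2" for j
    proof -
      have "(1-s) * (x j)^2 + s * (z j)^2 - (v j)^2 = s * (1-s) * (x j - z j)^2"
        by (simp add: v_def power2_eq_square algebra_simps)
      moreover have "s * (1-s) * (x j - z j)^2 \<ge> 0" using s by simp
      ultimately show ?thesis by linarith
    qed
    have "(\<Sum>j<d. (v j)^2) \<le> (\<Sum>j<d. (1-s) * (x j)^2 + s * (z j)^2)"
      by (intro sum_mono pt)
    also have "\<dots> = (1-s) * (\<Sum>j<d. (x j)^2) + s * (\<Sum>j<d. (z j)^2)"
      by (simp add: sum.distrib sum_distrib_left)
    also have "\<dots> \<le> (1-s) * 1 + s * 1"
      using xb z s unfolding unit_ball_iff by (intro add_mono mult_left_mono) auto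
    finally have "(\<Sum>j<d. (v j)^2) \<le> 1" by simp
    then have vb: "v \<in> unit_ball d" using xb z unfolding unit_ball_iff by (auto simp: v_def)
    have "F v - F x = s * a + s^2 * b"
    proof -
      have "(\<Sum>j<d. (v j - y j)^2) - (\<Sum>j<d. (x j - y j)^2)
          = (\<Sum>j<d. 2 * s * ((x j - y j) * (z j - x j)) + s^2 * (z j - x j)^2)"
        by (subst sum_subtractf[symmetric], rule sum.cong, simp, simp add: v_def power2_eq_square algebra_simps)
      also have "\<dots> = 2 * s * (\<Sum>j<d. (x j - y j) * (z j - x j)) + s^2 * (\<Sum>j<d. (z j - x j)^2)"
        by (simp add: sum.distrib sum_distrib_left)
      finally have Q: "(\<Sum>j<d. (v j - y j)^2) - (\<Sum>j<d. (x j - y j)^2) = \<dots>" .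
      have L: "dotv d g v - dotv d g x = s * (\<Sum>j<d. g j * (z j - x j))"
        unfolding dotv_def by (subst sum_subtractf[symmetric], subst sum_distrib_left, rule sum.cong, simp, simp add: v_def algebra_simps)
      show ?thesis using Q L unfolding F_def a_def b_def by (simp add: algebra_simps)
    qed
    with min[OF vb] have "0 \<le> s * a + s^2 * b" by simp
    then have "0 \<le> s * (a + s * b)" by (simp add: power2_eq_square algebra_simps)
    then show ?thesis using s by (simp add: zero_le_mult_iff)
  qed
  note H = this
  have b0: "b \<ge> 0" unfolding b_def by (simp add: sum_nonneg)
  have a0: "a \<ge> 0" using lin_quad_nonneg[OF b0 H] .
  have E1: "(\<Sum>j<d. (z j - y j)^2) = (\<Sum>j<d. (x j - y j)^2) + (\<Sum>j<d. (z j - x j)^2) + 2 * (\<Sum>j<d. (x j - y j) * (z j - x j))"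
  proof -
    have "(\<Sum>j<d. (z j - y j)^2) = (\<Sum>j<d. (x j - y j)^2 + (z j - x j)^2 + 2 * ((x j - y j) * (z j - x j)))"
      by (rule sum.cong, simp, simp add: power2_eq_square algebra_simps)
    then show ?thesis by (simp only: sum.distrib sum_distrib_left)
  qed
  have E2: "dotv d g z = dotv d g x + (\<Sum>j<d. g j * (z j - x j))"
  proof -
    have "dotv d g z = (\<Sum>j<d. g j * x j + g j * (z j - x j))"
      unfolding dotv_def by (rule sum.cong, simp, simp add: algebra_simps)
    then show ?thesis by (simp only: dotv_def sum.distrib)
  qed
  have "\<eta> * dotv d g z = \<eta> * dotv d g x + \<eta> * (\<Sum>j<d. g j * (z j - x j))"
    using E2 by (simp add: distrib_left)
  then show ?thesis using a0 E1 unfolding a_def by linarith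
qed

definition Bil :: "nat \<Rightarrow> nat \<Rightarrow> (nat \<Rightarrow> nat \<Rightarrow> real) \<Rightarrow> (nat \<Rightarrow> real) \<Rightarrow> (nat \<Rightarrow> real) \<Rightarrow> real" where
  "Bil n d A q v = (\<Sum>i<n. q i * (\<Sum>j<d. A i j * v j))"

lemma game_Bil: "game n d A v q = Bil n d A q v"
  by (simp add: game_def dotv_def matvec_def Bil_def)

lemma dot_matvec_Bil: "dotv n (matvec n d A v) q = Bil n d A q v"
  by (simp add: dotv_def matvec_def Bil_def mult.commute)

lemma dot_matTvec_Bil: "dotv d (\<lambda>j. - matTvec n d A q j) v = - Bil n d A q v"
proof -
  have "dotv d (\<lambda>j. - matTvec n d A q j) v = - (\<Sum>j<d. \<Sum>i<n. q i * (A i j * v j))"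
    unfolding dotv_def matTvec_def
    by (simp add: sum_negf[symmetric] sum_distrib_right sum_distrib_left mult_ac)
  also have "\<dots> = - Bil n d A q v"
    unfolding Bil_def by (subst sum.swap) (simp add: sum_distrib_left)
  finally show ?thesis .
qed

lemma Bil_cross: "Bil n d A q v - Bil n d A q v' - Bil n d A q' v + Bil n d A q' v'
   = Bil n d A (\<lambda>i. q i - q' i) (\<lambda>j. v j - v' j)"
proof -
  have "Bil n d A (\<lambda>i. q i - q' i) (\<lambda>j. v j - v' j)
     = (\<Sum>i<n. q i * (\<Sum>j<d. A i j * v j) - q i * (\<Sum>j<d. A i j * v' j)
            - q' i * (\<Sum>j<d. A i j * v j) + q' i * (\<Sum>j<d. A i j * v' j))"
    unfolding Bil_def
  proof (rule sum.cong)
    fix i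
    have "(\<Sum>j<d. A i j * (v j - v' j)) = (\<Sum>j<d. A i j * v j) - (\<Sum>j<d. A i j * v' j)"
      by (simp add: sum_subtractf[symmetric] right_diff_distrib)
    then show "(q i - q' i) * (\<Sum>j<d. A i j * (v j - v' j)) = q i * (\<Sum>j<d. A i j * v j) - q i * (\<Sum>j<d. A i j * v' j)
            - q' i * (\<Sum>j<d. A i j * v j) + q' i * (\<Sum>j<d. A i j * v' j)"
      by (subst \<open>(\<Sum>j<d. A i j * (v j - v' j)) = _\<close>) (simp add: left_diff_distrib right_diff_distrib)
  qed simp
  also have "\<dots> = Bil n d A q v - Bil n d A q v' - Bil n d A q' v + Bil n d A q' v'"
    unfolding Bil_def by (simp only: sum.distrib sum_subtractf)
  finally show ?thesis by simp
qed

lemma sum_abs_cs: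
  fixes a b :: "nat \<Rightarrow> real"
  shows "\<bar>\<Sum>j<d. a j * b j\<bar> \<le> sqrt (\<Sum>j<d. (a j)^2) * sqrt (\<Sum>j<d. (b j)^2)"
proof -
  have "(\<Sum>j<d. a j * b j)^2 \<le> (\<Sum>j<d. (a j)^2) * (\<Sum>j<d. (b j)^2)"
    by (rule Cauchy_Schwarz_ineq_sum)
  then have "sqrt ((\<Sum>j<d. a j * b j)^2) \<le> sqrt ((\<Sum>j<d. (a j)^2) * (\<Sum>j<d. (b j)^2))"
    by (rule real_sqrt_le_mono)
  then show ?thesis by (simp add: real_sqrt_mult)
qed

lemma Bil_bound:
  assumes rows: "\<forall>i<n. normv d (\<lambda>j. if j < d then A i j else 0) \<le> 1"
  shows "\<bar>Bil n d A a b\<bar> \<le> (\<Sum>i<n. \<bar>a i\<bar>) * sqrt (\<Sum>j<d. (b j)^2)"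
proof -
  have r: "sqrt (\<Sum>j<d. (A i j)^2) \<le> 1" if "i < n" for i
  proof -
    have "(\<Sum>j<d. ((if j < d then A i j else 0))^2) = (\<Sum>j<d. (A i j)^2)" by (rule sum.cong) auto
    then show ?thesis using rows that by (simp add: normv_def)
  qed
  have "\<bar>Bil n d A a b\<bar> \<le> (\<Sum>i<n. \<bar>a i * (\<Sum>j<d. A i j * b j)\<bar>)"
    unfolding Bil_def by (rule sum_abs)
  also have "\<dots> \<le> (\<Sum>i<n. \<bar>a i\<bar> * sqrt (\<Sum>j<d. (b j)^2))"
  proof (rule sum_mono)
    fix i assume i: "i \<in> {..<n}"
    have "\<bar>\<Sum>j<d. A i j * b j\<bar> \<le> sqrt (\<Sum>j<d. (A i j)^2) * sqrt (\<Sum>j<d. (b j)^2)" by (rule sum_abs_cs)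
    also have "\<dots> \<le> 1 * sqrt (\<Sum>j<d. (b j)^2)" using r[of i] i by (intro mult_right_mono) (auto simp: sum_nonneg)
    finally show "\<bar>a i * (\<Sum>j<d. A i j * b j)\<bar> \<le> \<bar>a i\<bar> * sqrt (\<Sum>j<d. (b j)^2)"
      by (simp add: abs_mult mult_left_mono)
  qed
  also have "\<dots> = (\<Sum>i<n. \<bar>a i\<bar>) * sqrt (\<Sum>j<d. (b j)^2)" by (simp add: sum_distrib_right)
  finally show ?thesis .
qed

lemma amgm_s:
  fixes a b s :: real assumes "s > 0"
  shows "a * b \<le> s/2 * b^2 + a^2/(2*s)"
proof -
  have "0 \<le> (a - s*b)^2" by simp
  then have "2*s*(a*b) \<le> s^2*b^2 + a^2" by (simp add: power2_eq_square algebra_simps)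
  then have "2*s*(a*b) \<le> 2*s*(s/2 * b^2 + a^2/(2*s))"
    using assms by (simp add: algebra_simps power2_eq_square)
  then show ?thesis using assms by simp
qed

lemma telescope: "(\<Sum>t=1..T. f (t - 1) - f t) = f 0 - (f T :: real)" for f :: "nat \<Rightarrow> real"
  by (induction T) (simp_all add: sum.cl_ivl_Suc)

lemma KL_uniform:
  assumes u: "u \<in> simplex n" and n: "n \<ge> 1"
  shows "KL n u (\<lambda>i. if i < n then 1 / real n else 0) \<le> ln (real n)"
proof -
  have "KL n u (\<lambda>i. if i < n then 1 / real n else 0) \<le> (\<Sum>i<n. u i * ln (real n))"
    unfolding KL_def
  proof (rule sum_mono)
    fix i assume i: "i \<in> {..<n}"
    have u0: "u i \<ge> 0" using u i by (simp add: simplex_def)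
    have u1: "u i \<le> 1"
    proof -
      have "u i \<le> (\<Sum>k<n. u k)" using u i by (intro member_le_sum) (auto simp: simplex_def)
      then show ?thesis using u by (simp add: simplex_def)
    qed
    show "u i * ln (u i / (if i < n then 1 / real n else 0)) \<le> u i * ln (real n)"
    proof (cases "u i = 0")
      case False
      then have "u i > 0" using u0 by simp
      moreover have "ln (u i) \<le> 0" using u1 \<open>u i > 0\<close> by simp
      ultimately show ?thesis using i n by (simp add: ln_mult mult_left_mono)
    qed simp
  qed
  also have "\<dots> = ln (real n)" using u by (simp add: simplex_def sum_distrib_right[symmetric])
  finally show ?thesis .
qed

lemma ball_step:
  assumes s: "s > 0"
    and am: "is_arg_min (\<lambda>v. (1 / s) * dotv d (\<lambda>j. - matTvec n d A q j) v + 1/2 * (normv d (\<lambda>j. v j - y j))^2) (\<lambda>v. v \<in> unit_ball d) x"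
    and z: "z \<in> unit_ball d"
  shows "Bil n d A q z - Bil n d A q x + s/2 * (\<Sum>j<d. (x j - y j)^2) + s/2 * (\<Sum>j<d. (z j - x j)^2)
         \<le> s/2 * (\<Sum>j<d. (z j - y j)^2)"
proof -
  have I: "(1/s) * (- Bil n d A q x) + 1/2 * (\<Sum>j<d. (x j - y j)^2) + 1/2 * (\<Sum>j<d. (z j - x j)^2)
         \<le> (1/s) * (- Bil n d A q z) + 1/2 * (\<Sum>j<d. (z j - y j)^2)"
    using ball_argmin[OF am z] by (simp only: dot_matTvec_Bil)
  have "s * ((1/s) * (- Bil n d A q x) + 1/2 * (\<Sum>j<d. (x j - y j)^2) + 1/2 * (\<Sum>j<d. (z j - x j)^2))
         \<le> s * ((1/s) * (- Bil n d A q z) + 1/2 * (\<Sum>j<d. (z j - y j)^2))"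
    using I s by (intro mult_left_mono) auto
  then show ?thesis using s by (simp add: algebra_simps)
qed

lemma ring6: "(s::real) * (a - b - (c - d - e + f)) = s*a - s*b - s*c + s*d + s*e - s*f"
  by (simp add: algebra_simps)

lemma sqrt_sq_sum: "(sqrt (\<Sum>j<d. (f j)^2))^2 = (\<Sum>j<d. ((f j)::real)^2)"
  by (simp add: sum_nonneg)

lemma main_bound:
  fixes n d :: nat and A :: "nat \<Rightarrow> nat \<Rightarrow> real" and T :: nat
    and w p wh ph :: "nat \<Rightarrow> nat \<Rightarrow> real"
  assumes n2: "n \<ge> 2"
    and rows: "\<forall>i<n. normv d (\<lambda>j. if j < d then A i j else 0) \<le> 1"
    and wh0: "wh 0 = (\<lambda>j. 0)"
    and ph0: "ph 0 = (\<lambda>i. if i < n then 1 / real n else 0)"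
    and H: "\<forall>t\<in>{1..T}.
          is_arg_min (\<lambda>v. (1 / sqrt (ln (real n))) * dotv d (\<lambda>j. - matTvec n d A (ph (t - 1)) j) v
                          + 1/2 * (normv d (\<lambda>j. v j - wh (t - 1) j))\<^sup>2)
                     (\<lambda>v. v \<in> unit_ball d) (w t)
        \<and> is_arg_min (\<lambda>q. sqrt (ln (real n)) * dotv n (matvec n d A (wh (t - 1))) q
                          + KL n q (ph (t - 1)))
                     (\<lambda>q. q \<in> simplex n) (p t)
        \<and> is_arg_min (\<lambda>v. (1 / sqrt (ln (real n))) * dotv d (\<lambda>j. - matTvec n d A (p t) j) v
                          + 1/2 * (normv d (\<lambda>j. v j - wh (t - 1) j))\<^sup>2)
                     (\<lambda>v. v \<in> unit_ball d) (wh t)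
        \<and> is_arg_min (\<lambda>q. sqrt (ln (real n)) * dotv n (matvec n d A (w t)) q
                          + KL n q (ph (t - 1)))
                     (\<lambda>q. q \<in> simplex n) (ph t)"
  shows "((\<Sum>t=1..T. game n d A (w t) (p t))
          - Inf ((\<lambda>q. \<Sum>t=1..T. game n d A (w t) q) ` simplex n))
     + ((\<Sum>t=1..T. - game n d A (w t) (p t))
          - Inf ((\<lambda>v. \<Sum>t=1..T. - game n d A v (p t)) ` unit_ball d))
       \<le> 3/2 * sqrt (ln (real n))"
proof -
  define s where "s = sqrt (ln (real n))"
  have lnp: "ln (real n) > 0" using n2 by simp
  then have s0: "s > 0" by (simp add: s_def)
  have ss: "s * s = ln (real n)" using lnp by (simp add: s_def)
  note H' = H[folded s_def]
  have Am1: "is_arg_min (\<lambda>v. (1 / s) * dotv d (\<lambda>j. - matTvec n d A (ph (t - 1)) j) v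
                          + 1/2 * (normv d (\<lambda>j. v j - wh (t - 1) j))\<^sup>2) (\<lambda>v. v \<in> unit_ball d) (w t)"
    and Am2: "is_arg_min (\<lambda>q. s * dotv n (matvec n d A (wh (t - 1))) q + KL n q (ph (t - 1)))
                     (\<lambda>q. q \<in> simplex n) (p t)"
    and Am3: "is_arg_min (\<lambda>v. (1 / s) * dotv d (\<lambda>j. - matTvec n d A (p t) j) v
                          + 1/2 * (normv d (\<lambda>j. v j - wh (t - 1) j))\<^sup>2) (\<lambda>v. v \<in> unit_ball d) (wh t)"
    and Am4: "is_arg_min (\<lambda>q. s * dotv n (matvec n d A (w t)) q + KL n q (ph (t - 1)))
                     (\<lambda>q. q \<in> simplex n) (ph t)"
    if "t \<in> {1..T}" for t
    using H' that by blast+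
  have ph0s: "ph 0 \<in> simplex n \<and> (\<forall>i<n. ph 0 i > 0)"
    using n2 by (simp add: ph0 simplex_def)
  have pos: "t \<le> T \<Longrightarrow> ph t \<in> simplex n \<and> (\<forall>i<n. ph t i > 0)" for t
  proof (induction t)
    case 0 then show ?case using ph0s by simp
  next
    case (Suc t)
    then have IH: "ph t \<in> simplex n \<and> (\<forall>i<n. ph t i > 0)" by simp
    have "Suc t \<in> {1..T}" using Suc.prems by simp
    from Am4[OF this] have "is_arg_min (\<lambda>q. s * dotv n (matvec n d A (w (Suc t))) q + KL n q (ph t))
                     (\<lambda>q. q \<in> simplex n) (ph (Suc t))" by simp
    from KL_argmin[OF _ _ this] IH show ?case by blast
  qed
  define P where "P t = (\<Sum>i<n. \<bar>p t i - ph (t-1) i\<bar>)" for t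
  define Ph where "Ph t = (\<Sum>i<n. \<bar>p t i - ph t i\<bar>)" for t
  define Wh where "Wh t = sqrt (\<Sum>j<d. (w t j - wh t j)^2)" for t
  define Wm where "Wm t = sqrt (\<Sum>j<d. (w t j - wh (t-1) j)^2)" for t
  define Ew where "Ew t = P t * Wh t - s/2 * ((Wh t)^2 + (Wm t)^2)" for t
  define Ep where "Ep t = Ph t * Wm t - ((P t)^2 + (Ph t)^2) / (2*s)" for t
  define B where "B = Bil n d A"
  have stepW: "B (p t) u - B (p t) (w t) \<le> s/2 * (\<Sum>j<d. (u j - wh (t-1) j)^2) - s/2 * (\<Sum>j<d. (u j - wh t j)^2) + Ew t"
    if t: "t \<in> {1..T}" and u: "u \<in> unit_ball d" for t u
  proof -
    have whb: "wh t \<in> unit_ball d" using Am3[OF t] by (simp add: is_arg_min_def)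
    note I1 = ball_step[OF s0 Am1[OF t] whb]
    note I2 = ball_step[OF s0 Am3[OF t] u]
    have "\<bar>Bil n d A (\<lambda>i. p t i - ph (t-1) i) (\<lambda>j. w t j - wh t j)\<bar> \<le> P t * Wh t"
      unfolding P_def Wh_def by (rule Bil_bound[OF rows])
    then have C: "- (Bil n d A (p t) (w t) - Bil n d A (p t) (wh t) - Bil n d A (ph (t-1)) (w t) + Bil n d A (ph (t-1)) (wh t)) \<le> P t * Wh t"
      using Bil_cross[of n d A "p t" "w t" "wh t" "ph (t-1)"] by (simp add: abs_le_iff)
    have "(\<Sum>j<d. (wh t j - w t j)^2) = (\<Sum>j<d. (w t j - wh t j)^2)"
      by (rule sum.cong) (simp_all add: power2_commute)
    then have e1: "s/2 * (\<Sum>j<d. (wh t j - w t j)^2) = s/2 * (Wh t)^2"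
      by (simp add: Wh_def sqrt_sq_sum)
    have e2: "s/2 * (\<Sum>j<d. (w t j - wh (t-1) j)^2) = s/2 * (Wm t)^2"
      by (simp add: Wm_def sqrt_sq_sum)
    have e3: "s/2 * ((Wh t)^2 + (Wm t)^2) = s/2 * (Wh t)^2 + s/2 * (Wm t)^2"
      by (simp add: distrib_left)
    show ?thesis using I1 I2 C e1 e2 e3 unfolding Ew_def B_def by linarith
  qed
  have stepP: "B (p t) (w t) - B u (w t) \<le> KL n u (ph (t-1)) / s - KL n u (ph t) / s + Ep t"
    if t: "t \<in> {1..T}" and u: "u \<in> simplex n" for t u
  proof -
    have y: "ph (t-1) \<in> simplex n" "\<forall>i<n. ph (t-1) i > 0" using pos[of "t-1"] t by auto
    note K1all = KL_argmin[OF y Am2[OF t]]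
    note K2all = KL_argmin[OF y Am4[OF t]]
    have phs: "ph t \<in> simplex n" using K2all by blast
    have ps: "p t \<in> simplex n" "\<forall>i<n. p t i > 0" using K1all by blast+
    have K1: "s * B (p t) (wh (t-1)) + KL n (p t) (ph (t-1)) + KL n (ph t) (p t)
              = s * B (ph t) (wh (t-1)) + KL n (ph t) (ph (t-1))"
      using K1all phs unfolding B_def dot_matvec_Bil by blast
    have K2: "s * B (ph t) (w t) + KL n (ph t) (ph (t-1)) + KL n u (ph t)
              = s * B u (w t) + KL n u (ph (t-1))"
      using K2all u unfolding B_def dot_matvec_Bil by blast
    define Q where "Q = B (p t) (w t) - B (p t) (wh (t-1)) - B (ph t) (w t) + B (ph t) (wh (t-1))"
    have E: "s * (B (p t) (w t) - B u (w t) - Q) = s * B (p t) (w t) - s * B u (w t) - s * B (p t) (w t)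
         + s * B (p t) (wh (t-1)) + s * B (ph t) (w t) - s * B (ph t) (wh (t-1))"
      unfolding Q_def by (rule ring6)
    have X: "s * (B (p t) (w t) - B u (w t) - Q)
        = KL n u (ph (t-1)) - KL n u (ph t) - KL n (p t) (ph (t-1)) - KL n (ph t) (p t)"
      using K1 K2 E by linarith
    then have X': "B (p t) (w t) - B u (w t) - Q
        = (KL n u (ph (t-1)) - KL n u (ph t) - KL n (p t) (ph (t-1)) - KL n (ph t) (p t)) / s"
      using s0 by (simp add: eq_divide_eq mult.commute)
    have X'': "(KL n u (ph (t-1)) - KL n u (ph t) - KL n (p t) (ph (t-1)) - KL n (ph t) (p t)) / s
       = KL n u (ph (t-1)) / s - KL n u (ph t) / s - (KL n (p t) (ph (t-1)) + KL n (ph t) (p t)) / s"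
      by (simp add: diff_divide_distrib add_divide_distrib)
    have P1: "(P t)^2 \<le> 2 * KL n (p t) (ph (t-1))"
      unfolding P_def using ps y by (intro pinsker) (auto simp: simplex_def less_imp_le)
    have "(\<Sum>i<n. \<bar>ph t i - p t i\<bar>) = Ph t" unfolding Ph_def by (rule sum.cong) (simp_all add: abs_minus_commute)
    moreover have "(\<Sum>i<n. \<bar>ph t i - p t i\<bar>)^2 \<le> 2 * KL n (ph t) (p t)"
      using ps phs by (intro pinsker) (auto simp: simplex_def)
    ultimately have P2: "(Ph t)^2 \<le> 2 * KL n (ph t) (p t)" by simp
    have "((P t)^2 + (Ph t)^2) / 2 / s \<le> (KL n (p t) (ph (t-1)) + KL n (ph t) (p t)) / s"
      using P1 P2 s0 by (intro divide_right_mono) auto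
    then have D: "((P t)^2 + (Ph t)^2) / (2 * s) \<le> (KL n (p t) (ph (t-1)) + KL n (ph t) (p t)) / s"
      by (simp add: divide_divide_eq_left)
    have "\<bar>Bil n d A (\<lambda>i. p t i - ph t i) (\<lambda>j. w t j - wh (t-1) j)\<bar> \<le> Ph t * Wm t"
      unfolding Ph_def Wm_def by (rule Bil_bound[OF rows])
    then have C: "Q \<le> Ph t * Wm t"
      using Bil_cross[of n d A "p t" "w t" "wh (t-1)" "ph t"] unfolding Q_def B_def by (simp add: abs_le_iff)
    show ?thesis using X' X'' D C unfolding Ep_def by linarith
  qed
  have EE: "Ew t + Ep t \<le> 0" for t
  proof -
    have a1: "P t * Wh t \<le> s/2 * (Wh t)^2 + (P t)^2/(2*s)" by (rule amgm_s[OF s0])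
    have a2: "Ph t * Wm t \<le> s/2 * (Wm t)^2 + (Ph t)^2/(2*s)" by (rule amgm_s[OF s0])
    have e1: "s/2 * ((Wh t)^2 + (Wm t)^2) = s/2 * (Wh t)^2 + s/2 * (Wm t)^2" by (simp add: distrib_left)
    have e2: "((P t)^2 + (Ph t)^2) / (2*s) = (P t)^2/(2*s) + (Ph t)^2/(2*s)" by (simp add: add_divide_distrib)
    show ?thesis using a1 a2 e1 e2 unfolding Ew_def Ep_def by linarith
  qed
  have sumE: "(\<Sum>t=1..T. Ew t) + (\<Sum>t=1..T. Ep t) \<le> 0"
    unfolding sum.distrib[symmetric] by (rule sum_nonpos) (rule EE)
  have SW: "(\<Sum>t=1..T. B (p t) u - B (p t) (w t)) \<le> s/2 + (\<Sum>t=1..T. Ew t)"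
    if u: "u \<in> unit_ball d" for u
  proof -
    define f where "f t = s/2 * (\<Sum>j<d. (u j - wh t j)^2)" for t
    have "(\<Sum>t=1..T. B (p t) u - B (p t) (w t)) \<le> (\<Sum>t=1..T. (f (t-1) - f t) + Ew t)"
      by (rule sum_mono) (use stepW u in \<open>auto simp: f_def\<close>)
    also have "\<dots> = (f 0 - f T) + (\<Sum>t=1..T. Ew t)" by (simp only: sum.distrib telescope)
    also have "f 0 \<le> s/2"
    proof -
      have "(\<Sum>j<d. (u j - wh 0 j)^2) \<le> 1" using u by (simp add: wh0 unit_ball_iff)
      then show ?thesis unfolding f_def using s0 by (simp add: mult_left_le)
    qed
    moreover have "f T \<ge> 0" unfolding f_def using s0 by (simp add: sum_nonneg)
    ultimately show ?thesis by linarith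
  qed
  have SP: "(\<Sum>t=1..T. B (p t) (w t) - B u (w t)) \<le> s + (\<Sum>t=1..T. Ep t)"
    if u: "u \<in> simplex n" for u
  proof -
    define f where "f t = KL n u (ph t) / s" for t
    have "(\<Sum>t=1..T. B (p t) (w t) - B u (w t)) \<le> (\<Sum>t=1..T. (f (t-1) - f t) + Ep t)"
      by (rule sum_mono) (use stepP u in \<open>auto simp: f_def\<close>)
    also have "\<dots> = (f 0 - f T) + (\<Sum>t=1..T. Ep t)" by (simp only: sum.distrib telescope)
    also have "f 0 \<le> s"
    proof -
      have "KL n u (ph 0) \<le> ln (real n)" unfolding ph0 using u n2 by (intro KL_uniform) auto
      then have "f 0 \<le> ln (real n) / s" unfolding f_def using s0 by (intro divide_right_mono) auto
      also have "\<dots> = s" using ss s0 by (simp add: field_simps)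
      finally show ?thesis .
    qed
    moreover have "f T \<ge> 0"
    proof -
      have "KL n u (ph T) \<ge> 0" using pos[of T] u by (intro KL_nonneg) (auto simp: simplex_def)
      then show ?thesis unfolding f_def using s0 by simp
    qed
    ultimately show ?thesis by linarith
  qed
  have Inf1: "(\<Sum>t=1..T. B (p t) (w t)) - s - (\<Sum>t=1..T. Ep t)
      \<le> Inf ((\<lambda>q. \<Sum>t=1..T. game n d A (w t) q) ` simplex n)"
  proof (rule cInf_greatest)
    show "(\<lambda>q. \<Sum>t=1..T. game n d A (w t) q) ` simplex n \<noteq> {}" using ph0s by blast
  next
    fix x assume "x \<in> (\<lambda>q. \<Sum>t=1..T. game n d A (w t) q) ` simplex n"
    then obtain u where u: "u \<in> simplex n" and x: "x = (\<Sum>t=1..T. B u (w t))"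
      by (auto simp: game_Bil B_def)
    show "(\<Sum>t=1..T. B (p t) (w t)) - s - (\<Sum>t=1..T. Ep t) \<le> x"
      using SP[OF u] unfolding x sum_subtractf by linarith
  qed
  have Inf2: "- (\<Sum>t=1..T. B (p t) (w t)) - s/2 - (\<Sum>t=1..T. Ew t)
      \<le> Inf ((\<lambda>v. \<Sum>t=1..T. - game n d A v (p t)) ` unit_ball d)"
  proof (rule cInf_greatest)
    have "(\<lambda>j. 0) \<in> unit_ball d" by (simp add: unit_ball_iff)
    then show "(\<lambda>v. \<Sum>t=1..T. - game n d A v (p t)) ` unit_ball d \<noteq> {}" by blast
  next
    fix x assume "x \<in> (\<lambda>v. \<Sum>t=1..T. - game n d A v (p t)) ` unit_ball d"
    then obtain u where u: "u \<in> unit_ball d" and x: "x = - (\<Sum>t=1..T. B (p t) u)"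
      by (auto simp: game_Bil B_def sum_negf)
    show "- (\<Sum>t=1..T. B (p t) (w t)) - s/2 - (\<Sum>t=1..T. Ew t) \<le> x"
      using SW[OF u] unfolding x sum_subtractf by linarith
  qed
  have G1: "(\<Sum>t=1..T. game n d A (w t) (p t)) = (\<Sum>t=1..T. B (p t) (w t))"
    by (simp add: game_Bil B_def)
  have G2: "(\<Sum>t=1..T. - game n d A (w t) (p t)) = - (\<Sum>t=1..T. B (p t) (w t))"
    by (simp add: game_Bil B_def sum_negf)
  show ?thesis using Inf1 Inf2 G1 G2 sumE unfolding s_def[symmetric] by linarith
qed


theorem proposition3:
  "\<exists>C::real. \<forall>(n::nat) (d::nat) (A::nat \<Rightarrow> nat \<Rightarrow> real) (T::nat)
      (w::nat \<Rightarrow> nat \<Rightarrow> real) (p::nat \<Rightarrow> nat \<Rightarrow> real)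
      (wh::nat \<Rightarrow> nat \<Rightarrow> real) (ph::nat \<Rightarrow> nat \<Rightarrow> real).
     n \<ge> 2
     \<and> (\<forall>i<n. normv d (\<lambda>j. if j < d then A i j else 0) \<le> 1)
     \<and> wh 0 = (\<lambda>j. 0)
     \<and> ph 0 = (\<lambda>i. if i < n then 1 / real n else 0)
     \<and> (\<forall>t\<in>{1..T}.
          is_arg_min (\<lambda>v. (1 / sqrt (ln (real n))) * dotv d (\<lambda>j. - matTvec n d A (ph (t - 1)) j) v
                          + 1/2 * (normv d (\<lambda>j. v j - wh (t - 1) j))\<^sup>2)
                     (\<lambda>v. v \<in> unit_ball d) (w t)
        \<and> is_arg_min (\<lambda>q. sqrt (ln (real n)) * dotv n (matvec n d A (wh (t - 1))) q
                          + KL n q (ph (t - 1)))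
                     (\<lambda>q. q \<in> simplex n) (p t)
        \<and> is_arg_min (\<lambda>v. (1 / sqrt (ln (real n))) * dotv d (\<lambda>j. - matTvec n d A (p t) j) v
                          + 1/2 * (normv d (\<lambda>j. v j - wh (t - 1) j))\<^sup>2)
                     (\<lambda>v. v \<in> unit_ball d) (wh t)
        \<and> is_arg_min (\<lambda>q. sqrt (ln (real n)) * dotv n (matvec n d A (w t)) q
                          + KL n q (ph (t - 1)))
                     (\<lambda>q. q \<in> simplex n) (ph t))
     \<longrightarrow>
       ((\<Sum>t=1..T. game n d A (w t) (p t))
          - Inf ((\<lambda>q. \<Sum>t=1..T. game n d A (w t) q) ` simplex n))
     + ((\<Sum>t=1..T. - game n d A (w t) (p t))
          - Inf ((\<lambda>v. \<Sum>t=1..T. - game n d A v (p t)) ` unit_ball d))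
       \<le> C * sqrt (ln (real n))"
    apply (intro exI[of _ "3/2"] allI impI)
  apply (elim conjE)
  apply (rule main_bound)
  apply assumption+
  done

end
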